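(* If $C$ is a free $E$-linear code of length $2n$, then $LSHull(C)=SHull(C)$.
   Context: $E=\langle \kappa,\tau \mid 2\kappa=2\tau=0,\ \kappa^2=\kappa,\ \tau^2=\tau,\ \kappa\tau=\kappa,\ \tau\kappa=\tau\rangle$ is the non-unital ring $\{0,\kappa,\tau,\zeta\}$, $\zeta=\kappa+\tau$, with $e\kappa=e\tau=e$, $e\zeta=0$ for all $e\in E$. Every $e\in E$ is uniquely $u\kappa+v\zeta$ ($u,v\in\mathbb{F}_2$); $\pi(u\kappa+v\zeta)=u$, componentwise. An $E$-linear code of length $2n$ is a left $E$-submodule $C\subseteq E^{2n}$; $C_{Res}=\pi(C)$, $C_{Tor}=\{v\in\mathbb{F}_2^{2n}:\zeta v\in C\}$ (componentwise, $0\cdot\zeta=0,1\cdot\zeta=\zeta$); $C$ is free if $C_{Res}=C_{Tor}$. Symplectic inner product: $\langle (u|v),(u'|v')\rangle_s=\sum_i u_iv'_i+\sum_i v_iu'_i$. $C^{\perp_{S_L}}=\{z\in E^{2n}:\langle z,w\rangle_s=0\ \forall w\in C\}$, $C^{\perp_{S_R}}=\{z\in E^{2n}:\langle w,z\rangle_s=0\ \forall w\in C\}$, $C^{\perp_S}=C^{\perp_{S_L}}\cap C^{\perp_{S_R}}$, $LSHull(C)=C\cap C^{\perp_{S_L}}$, $SHull(C)=C\cap C^{\perp_S}$. *)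

theory Defs
  imports Main
begin

text \<open>The four-element non-unital ring E = {0, kappa, tau, zeta}, zeta = kappa + tau.
  Every element is u*kappa + v*zeta with u, v in F2:
  E0 = (0,0), Ek = kappa = (1,0), Ez = zeta = (0,1), Et = tau = (1,1).
  Addition is componentwise XOR (characteristic 2); multiplication:
  e*kappa = e*tau = e, e*zeta = e*0 = 0.\<close>

datatype E = E0 | Ek | Et | Ez

fun E_to :: "E \<Rightarrow> bool \<times> bool" where
  "E_to E0 = (False, False)"
| "E_to Ek = (True, False)"
| "E_to Ez = (False, True)"
| "E_to Et = (True, True)"

fun E_of :: "bool \<times> bool \<Rightarrow> E" where
  "E_of (False, False) = E0"
| "E_of (True, False) = Ek"
| "E_of (False, True) = Ez"
| "E_of (True, True) = Et"

lemma E_of_to[simp]: "E_of (E_to e) = e" by (cases e) auto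

instantiation E :: ab_group_add
begin
definition zero_E :: E where "zero_E = E0"
definition plus_E :: "E \<Rightarrow> E \<Rightarrow> E" where
  "plus_E a b = E_of (fst (E_to a) \<noteq> fst (E_to b), snd (E_to a) \<noteq> snd (E_to b))"
definition uminus_E :: "E \<Rightarrow> E" where "uminus_E a = a"
definition minus_E :: "E \<Rightarrow> E \<Rightarrow> E" where "minus_E a b = a + b"
instance
  apply standard
  unfolding zero_E_def plus_E_def uminus_E_def minus_E_def
  apply (case_tac a; case_tac b; case_tac c; simp)
  apply (case_tac a; case_tac b; simp)
  apply (case_tac a; simp)
  apply (case_tac a; simp)
  apply (case_tac a; case_tac b; simp)
  done
end

instantiation E :: times
begin
definition times_E :: "E \<Rightarrow> E \<Rightarrow> E" where
  "times_E a b = (if fst (E_to b) then a else E0)"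
instance ..
end

lemma E_tables:
  "Ek * Ek = Ek" "Et * Et = Et" "Ek * Et = Ek" "Et * Ek = Et" "Ek + Et = Ez"
  by (simp_all add: times_E_def plus_E_def)

text \<open>Residue map pi : E -> F2, pi(u kappa + v zeta) = u (F2 rendered as bool).\<close>
definition piE :: "E \<Rightarrow> bool" where "piE e = fst (E_to e)"

definition zeta_scal :: "bool \<Rightarrow> E" where "zeta_scal b = (if b then Ez else E0)"

text \<open>E^(2n): vectors indexed by 0..<2n (coordinates i and n+i form the (u|v) split),
  represented as functions vanishing outside {0..<2n}.\<close>
definition Evec :: "nat \<Rightarrow> (nat \<Rightarrow> E) set" where
  "Evec n = {x. \<forall>i\<ge>2*n. x i = 0}"

definition F2vec :: "nat \<Rightarrow> (nat \<Rightarrow> bool) set" where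
  "F2vec n = {x. \<forall>i\<ge>2*n. x i = False}"

definition E_linear_code :: "nat \<Rightarrow> (nat \<Rightarrow> E) set \<Rightarrow> bool" where
  "E_linear_code n C \<longleftrightarrow> C \<subseteq> Evec n \<and> (\<lambda>_. 0) \<in> C
     \<and> (\<forall>x\<in>C. \<forall>y\<in>C. (\<lambda>i. x i + y i) \<in> C)
     \<and> (\<forall>e::E. \<forall>x\<in>C. (\<lambda>i. e * x i) \<in> C)"

definition C_Res :: "nat \<Rightarrow> (nat \<Rightarrow> E) set \<Rightarrow> (nat \<Rightarrow> bool) set" where
  "C_Res n C = (\<lambda>c. \<lambda>i. piE (c i)) ` C"

definition C_Tor :: "nat \<Rightarrow> (nat \<Rightarrow> E) set \<Rightarrow> (nat \<Rightarrow> bool) set" where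
  "C_Tor n C = {v \<in> F2vec n. (\<lambda>i. zeta_scal (v i)) \<in> C}"

definition free_code :: "nat \<Rightarrow> (nat \<Rightarrow> E) set \<Rightarrow> bool" where
  "free_code n C \<longleftrightarrow> C_Res n C = C_Tor n C"

definition symp :: "nat \<Rightarrow> (nat \<Rightarrow> E) \<Rightarrow> (nat \<Rightarrow> E) \<Rightarrow> E" where
  "symp n x y = (\<Sum>i<n. x i * y (n + i)) + (\<Sum>i<n. x (n + i) * y i)"

definition perp_SL :: "nat \<Rightarrow> (nat \<Rightarrow> E) set \<Rightarrow> (nat \<Rightarrow> E) set" where
  "perp_SL n C = {z \<in> Evec n. \<forall>w\<in>C. symp n z w = 0}"

definition perp_SR :: "nat \<Rightarrow> (nat \<Rightarrow> E) set \<Rightarrow> (nat \<Rightarrow> E) set" where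
  "perp_SR n C = {z \<in> Evec n. \<forall>w\<in>C. symp n w z = 0}"

definition perp_S :: "nat \<Rightarrow> (nat \<Rightarrow> E) set \<Rightarrow> (nat \<Rightarrow> E) set" where
  "perp_S n C = perp_SL n C \<inter> perp_SR n C"

definition LSHull :: "nat \<Rightarrow> (nat \<Rightarrow> E) set \<Rightarrow> (nat \<Rightarrow> E) set" where
  "LSHull n C = C \<inter> perp_SL n C"

definition SHull :: "nat \<Rightarrow> (nat \<Rightarrow> E) set \<Rightarrow> (nat \<Rightarrow> E) set" where
  "SHull n C = C \<inter> perp_S n C"

end

theory Submission
  imports Defs "HOL-Library.Z2"
begin

definition f1 :: "E \<Rightarrow> bit" where "f1 e = (if fst (E_to e) then 1 else 0)"
definition f2 :: "E \<Rightarrow> bit" where "f2 e = (if snd (E_to e) then 1 else 0)"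

lemma f1_add: "f1 (a + b) = f1 a + f1 b"
  by (cases a; cases b; simp add: f1_def plus_E_def)
lemma f2_add: "f2 (a + b) = f2 a + f2 b"
  by (cases a; cases b; simp add: f2_def plus_E_def)
lemma f1_zero: "f1 0 = 0" by (simp add: f1_def zero_E_def)
lemma f2_zero: "f2 0 = 0" by (simp add: f2_def zero_E_def)
lemma f1_mult: "f1 (a * b) = f1 a * f1 b"
  by (cases a; cases b; simp add: f1_def times_E_def)
lemma f2_mult: "f2 (a * b) = f2 a * f1 b"
  by (cases a; cases b; simp add: f1_def f2_def times_E_def)
lemma E_eq0: "(e = 0) \<longleftrightarrow> f1 e = 0 \<and> f2 e = 0"
  by (cases e; simp add: f1_def f2_def zero_E_def)

lemma f1_sum: "f1 (sum g A) = (\<Sum>i\<in>A. f1 (g i))"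
  by (induction A rule: infinite_finite_induct) (simp_all add: f1_zero f1_add)
lemma f2_sum: "f2 (sum g A) = (\<Sum>i\<in>A. f2 (g i))"
  by (induction A rule: infinite_finite_induct) (simp_all add: f2_zero f2_add)

definition F1 :: "nat \<Rightarrow> (nat \<Rightarrow> E) \<Rightarrow> (nat \<Rightarrow> E) \<Rightarrow> bit" where
  "F1 n x y = (\<Sum>i<n. f1 (x i) * f1 (y (n+i))) + (\<Sum>i<n. f1 (x (n+i)) * f1 (y i))"

lemma symp_f1: "f1 (symp n x y) = F1 n x y"
  by (simp add: symp_def F1_def f1_add f1_sum f1_mult)

lemma symp_f2: "f2 (symp n x y) = (\<Sum>i<n. f2 (x i) * f1 (y (n+i))) + (\<Sum>i<n. f2 (x (n+i)) * f1 (y i))"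
  by (simp add: symp_def f2_add f2_sum f2_mult)

lemma F1_sym: "F1 n x y = F1 n y x"
proof -
  have "(\<Sum>i<n. f1 (x i) * f1 (y (n+i))) = (\<Sum>i<n. f1 (y (n+i)) * f1 (x i))"
    by (rule sum.cong) (auto simp: mult.commute)
  moreover have "(\<Sum>i<n. f1 (x (n+i)) * f1 (y i)) = (\<Sum>i<n. f1 (y i) * f1 (x (n+i)))"
    by (rule sum.cong) (auto simp: mult.commute)
  ultimately show ?thesis unfolding F1_def by (simp only: add.commute)
qed

theorem mainTheorem16:
  fixes n :: nat and C :: "(nat \<Rightarrow> E) set"
  assumes "E_linear_code n C" and "free_code n C"
  shows "LSHull n C = SHull n C"
proof
  show "SHull n C \<subseteq> LSHull n C" unfolding SHull_def LSHull_def perp_S_def by blast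
next
  have lin: "C \<subseteq> Evec n" "\<And>x y. x \<in> C \<Longrightarrow> y \<in> C \<Longrightarrow> (\<lambda>i. x i + y i) \<in> C"
    "\<And>e x. x \<in> C \<Longrightarrow> (\<lambda>i. e * x i) \<in> C"
    using assms(1) unfolding E_linear_code_def by auto
  have fr: "C_Tor n C \<subseteq> C_Res n C" using assms(2) unfolding free_code_def by simp
  show "LSHull n C \<subseteq> SHull n C"
  proof
    fix z assume "z \<in> LSHull n C"
    hence zC: "z \<in> C" and zE: "z \<in> Evec n" and zp: "\<And>w. w \<in> C \<Longrightarrow> symp n z w = 0"
      unfolding LSHull_def perp_SL_def by auto
    have "symp n w z = 0" if wC: "w \<in> C" for w
    proof -
      define v where "v = (\<lambda>i. snd (E_to (w i)))"
      have "(\<lambda>i. (Ek * w i) + w i) \<in> C" using lin wC by auto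
      moreover have "(\<lambda>i. (Ek * w i) + w i) = (\<lambda>i. zeta_scal (v i))"
        by (rule ext, simp add: v_def, case_tac "w i"; simp add: times_E_def plus_E_def zeta_scal_def)
      ultimately have "(\<lambda>i. zeta_scal (v i)) \<in> C" by simp
      moreover have "v \<in> F2vec n" using lin(1) wC
        by (auto simp: F2vec_def Evec_def v_def zero_E_def)
      ultimately have "v \<in> C_Tor n C" by (simp add: C_Tor_def)
      with fr obtain c where cC: "c \<in> C" and cv: "v = (\<lambda>i. piE (c i))"
        unfolding C_Res_def by auto
      have f2w: "f2 (w i) = f1 (c i)" for i
        using fun_cong[OF cv, of i] by (simp add: v_def f1_def f2_def piE_def)
      have "f1 (symp n w z) = 0" using zp[OF wC] F1_sym symp_f1 by (metis f1_zero)
      moreover have "f2 (symp n w z) = 0"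
        using zp[OF cC] F1_sym[of n z c] symp_f1[of n z c] symp_f1[of n c z]
        by (simp add: symp_f2 f2w f1_zero F1_def)
      ultimately show ?thesis using E_eq0 by blast
    qed
    thus "z \<in> SHull n C" using zC zE zp
      unfolding SHull_def perp_S_def perp_SL_def perp_SR_def by auto
  qed
qed

end
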